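(* Let $p$ be an odd prime and $q\in\mathbb C_p$ with $|1-q|_p<p^{-1/(p-1)}$. For $h\in\mathbb Z$, $n\in\mathbb Z_+$, $r\in\mathbb N$ and $x\in\mathbb Z_p$, $$E_{n,q}^{(h,-r)}(x)=\frac{1}{2^r}\sum_{m=0}^r\frac{1}{[m]_q!}\sum_{k=0}^mq^{(h-r)m}S_1(m-1,k;q)(-1)^k[r]_q^{m-k}[x+m]_q^n.$$
   Context: For $x\in\mathbb Z_p$, $[x]_q=\frac{1-q^x}{1-q}$; $[m]_q!=[m]_q\cdots[1]_q$, $[0]_q!=1$. The fermionic $p$-adic integral is $\int_{\mathbb Z_p}f(x)\,d\mu_{-1}(x)=\lim_{N\to\infty}\sum_{x=0}^{p^N-1}f(x)(-1)^x$. The extended higher-order Nörlund type $q$-Euler polynomials are $E_{n,q}^{(h,-r)}(x)=\frac{1}{(1-q)^n}\sum_{l=0}^n\binom nl(-1)^l\frac{q^{lx}}{\int_{\mathbb Z_p}\cdots\int_{\mathbb Z_p}q^{l(x_1+\cdots+x_r)}q^{\sum_{j=1}^r(h-j)x_j}\,d\mu_{-1}(x_1)\cdots d\mu_{-1}(x_r)}$ (iterated fermionic integrals). The $q$-Stirling numbers of the first kind are defined by $\prod_{k=1}^N(1+[k]_qz)=\sum_{k\ge0}S_1(N,k;q)z^k$ for $N\ge-1$ (empty product $=1$ for $N\le0$; $S_1(N,k;q)=0$ for $k>N$, and in particular $S_1(-1,0;q)=1$). *)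

theory Defs
  imports Complex_Main "HOL-Computational_Algebra.Polynomial"
begin

definition conv_abs :: "('a::field \<Rightarrow> real) \<Rightarrow> (nat \<Rightarrow> 'a) \<Rightarrow> 'a \<Rightarrow> bool" where
  "conv_abs av s L \<longleftrightarrow> (\<forall>e>0. \<exists>N. \<forall>n\<ge>N. av (s n - L) < e)"

definition lim_abs :: "('a::field \<Rightarrow> real) \<Rightarrow> (nat \<Rightarrow> 'a) \<Rightarrow> 'a" where
  "lim_abs av s = (THE L. conv_abs av s L)"

definition nonarch_abs :: "('a::field \<Rightarrow> real) \<Rightarrow> bool" where
  "nonarch_abs av \<longleftrightarrow> (\<forall>x. av x \<ge> 0) \<and> (\<forall>x. av x = 0 \<longleftrightarrow> x = 0)
     \<and> (\<forall>x y. av (x * y) = av x * av y) \<and> (\<forall>x y. av (x + y) \<le> max (av x) (av y))"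

definition complete_abs :: "('a::field \<Rightarrow> real) \<Rightarrow> bool" where
  "complete_abs av \<longleftrightarrow> (\<forall>s. (\<forall>e>0. \<exists>N. \<forall>m\<ge>N. \<forall>n\<ge>N. av (s m - s n) < e) \<longrightarrow> (\<exists>L. conv_abs av s L))"

definition Cp_like :: "nat \<Rightarrow> ('a::field_char_0 \<Rightarrow> real) \<Rightarrow> bool" where
  "Cp_like p av \<longleftrightarrow> nonarch_abs av \<and> complete_abs av \<and> av (of_nat p) = 1 / real p
     \<and> (\<forall>f::'a poly. degree f > 0 \<longrightarrow> (\<exists>z. poly f z = 0))"

section \<open>p-adic integers as coherent residue sequences\<close>

definition zp :: "nat \<Rightarrow> (nat \<Rightarrow> int) \<Rightarrow> bool" where
  "zp p x \<longleftrightarrow> (\<forall>N. 0 \<le> x N \<and> x N < int p ^ N) \<and> (\<forall>N. x (Suc N) mod int p ^ N = x N)"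

definition zp_of_int :: "nat \<Rightarrow> int \<Rightarrow> (nat \<Rightarrow> int)" where
  "zp_of_int p k = (\<lambda>N. k mod int p ^ N)"

definition zp_add :: "nat \<Rightarrow> (nat \<Rightarrow> int) \<Rightarrow> (nat \<Rightarrow> int) \<Rightarrow> (nat \<Rightarrow> int)" where
  "zp_add p x y = (\<lambda>N. (x N + y N) mod int p ^ N)"

definition zp_scale :: "nat \<Rightarrow> int \<Rightarrow> (nat \<Rightarrow> int) \<Rightarrow> (nat \<Rightarrow> int)" where
  "zp_scale p k x = (\<lambda>N. (k * x N) mod int p ^ N)"

definition zp_sum :: "nat \<Rightarrow> nat \<Rightarrow> (nat \<Rightarrow> nat \<Rightarrow> int) \<Rightarrow> (nat \<Rightarrow> int)" where
  "zp_sum p r v = (\<lambda>N. (\<Sum>j=1..r. v j N) mod int p ^ N)"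

definition qpow :: "('a::field \<Rightarrow> real) \<Rightarrow> 'a \<Rightarrow> (nat \<Rightarrow> int) \<Rightarrow> 'a" where
  "qpow av q x = lim_abs av (\<lambda>N. q ^ nat (x N))"

definition qbr :: "('a::field \<Rightarrow> real) \<Rightarrow> 'a \<Rightarrow> (nat \<Rightarrow> int) \<Rightarrow> 'a" where
  "qbr av q x = (1 - qpow av q x) / (1 - q)"

definition qnat :: "'a::field \<Rightarrow> nat \<Rightarrow> 'a" where
  "qnat q k = (1 - q ^ k) / (1 - q)"

definition qfact :: "'a::field \<Rightarrow> nat \<Rightarrow> 'a" where
  "qfact q m = (\<Prod>k=1..m. qnat q k)"

text \<open>q-Stirling numbers of the first kind, N \<ge> -1 (empty product for N \<le> 0).\<close>
definition qS1 :: "'a::field \<Rightarrow> int \<Rightarrow> nat \<Rightarrow> 'a" where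
  "qS1 q N k = coeff (\<Prod>i\<in>{1..nat N}. [:1, qnat q i:]) k"

definition fint :: "nat \<Rightarrow> ('a::field \<Rightarrow> real) \<Rightarrow> ((nat \<Rightarrow> int) \<Rightarrow> 'a) \<Rightarrow> 'a" where
  "fint p av f = lim_abs av (\<lambda>N. \<Sum>k<p ^ N. f (zp_of_int p (int k)) * (-1) ^ k)"

text \<open>Iterated integral over x_1,...,x_r (x_1 innermost).\<close>
fun mfint :: "nat \<Rightarrow> ('a::field \<Rightarrow> real) \<Rightarrow> nat \<Rightarrow> ((nat \<Rightarrow> nat \<Rightarrow> int) \<Rightarrow> 'a) \<Rightarrow> 'a" where
  "mfint p av 0 F = F (\<lambda>_. zp_of_int p 0)"
| "mfint p av (Suc r) F = fint p av (\<lambda>y. mfint p av r (\<lambda>v. F (v(Suc r := y))))"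

definition Enq :: "nat \<Rightarrow> ('a::field \<Rightarrow> real) \<Rightarrow> 'a \<Rightarrow> int \<Rightarrow> nat \<Rightarrow> nat \<Rightarrow> (nat \<Rightarrow> int) \<Rightarrow> 'a" where
  "Enq p av q h r n x = 1 / (1 - q) ^ n *
     (\<Sum>l=0..n. of_nat (n choose l) * (-1) ^ l * qpow av q (zp_scale p (int l) x) /
        mfint p av r (\<lambda>v. qpow av q (zp_scale p (int l) (zp_sum p r v)) *
            (\<Prod>j=1..r. qpow av q (zp_scale p (h - int j) (v j)))))"

end

theory Submission
  imports Defs "HOL-Computational_Algebra.Primes"
begin



locale qsetup =
  fixes p :: nat and A :: "'a::field_char_0 \<Rightarrow> real" and q :: 'a
  assumes pr: "prime p" and od: "odd p" and na: "nonarch_abs A" and cp: "complete_abs A"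
    and Ap: "A (of_nat p) = 1 / real p"
    and small: "A (1 - q) < real p powr (- 1 / (real p - 1))" and q1: "q \<noteq> 1"
begin

lemma A_nonneg: "A x \<ge> 0" using na unfolding nonarch_abs_def by auto
lemma A_zero_iff: "A x = 0 \<longleftrightarrow> x = 0" using na unfolding nonarch_abs_def by auto
lemma A_mult: "A (x * y) = A x * A y" using na unfolding nonarch_abs_def by auto
lemma A_add: "A (x + y) \<le> max (A x) (A y)" using na unfolding nonarch_abs_def by auto

lemma A_0[simp]: "A 0 = 0" using A_zero_iff by auto
lemma A_1[simp]: "A 1 = 1"
proof -
  have "A 1 = A 1 * A 1" using A_mult[of 1 1] by simp
  moreover have "A 1 \<noteq> 0" using A_zero_iff by simp
  ultimately show ?thesis by (metis mult_cancel_right1)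
qed
lemma A_m1[simp]: "A (-1) = 1"
proof -
  have "A (-1) * A (-1) = 1" using A_mult[of "-1" "-1"] by simp
  then have "(A (-1) - 1) * (A (-1) + 1) = 0" by (simp add: algebra_simps)
  moreover have "A (-1) + 1 > 0" using A_nonneg[of "-1"] by simp
  ultimately show ?thesis by simp
qed
lemma A_uminus[simp]: "A (- x) = A x"
  using A_mult[of "-1" x] by simp
lemma A_commute: "A (x - y) = A (y - x)"
  by (metis A_uminus minus_diff_eq)
lemma A_diff: "A (x - y) \<le> max (A x) (A y)"
  using A_add[of x "-y"] by simp
lemma A_power: "A (x ^ n) = A x ^ n"
  by (induction n) (auto simp: A_mult)
lemma A_inverse: "A (inverse x) = inverse (A x)"
proof (cases "x = 0")
  case False
  then have "A x * A (inverse x) = 1" using A_mult[of x "inverse x"] by simp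
  then show ?thesis using inverse_unique[of "A x" "A (inverse x)"] by simp
qed simp
lemma A_divide: "A (x / y) = A x / A y"
  by (simp add: divide_inverse A_mult A_inverse)

lemma A_sum_le:
  assumes "\<And>i. i \<in> S \<Longrightarrow> A (f i) \<le> c" "c \<ge> 0"
  shows "A (sum f S) \<le> c"
  using assms
proof (induction S rule: infinite_finite_induct)
  case (insert x F)
  then have "A (f x) \<le> c" "A (sum f F) \<le> c" by auto
  then show ?case using A_add[of "f x" "sum f F"] insert(1,2) by simp
qed auto

lemma A_sum_less:
  assumes "\<And>i. i \<in> S \<Longrightarrow> A (f i) < c" "c > 0"
  shows "A (sum f S) < c"
  using assms
proof (induction S rule: infinite_finite_induct)
  case (insert x F)
  then have "A (f x) < c" "A (sum f F) < c" by auto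
  then show ?case using A_add[of "f x" "sum f F"] insert(1,2) by simp
qed auto

lemma A_of_nat_le: "A (of_nat n) \<le> 1"
proof (induction n)
  case (Suc n) then show ?case using A_add[of 1 "of_nat n"] by simp
qed simp
lemma A_of_int_le: "A (of_int k) \<le> 1"
  by (cases k rule: int_cases2) (auto simp: A_of_nat_le)

lemma A_strict: assumes "A x < A y" shows "A (x + y) = A y"
proof -
  have 1: "A (x + y) \<le> A y" using A_add[of x y] assms by simp
  have "A y \<le> max (A (x + y)) (A x)" using A_add[of "x+y" "-x"] by simp
  with assms 1 show ?thesis by linarith
qed

lemma p_ge3: "p \<ge> 3"
  using prime_ge_2_nat[OF pr] od by (cases "p = 2") auto

lemma A_coprime: assumes "coprime b p" shows "A (of_nat b) = 1"
proof -
  obtain u v :: int where uv: "u * int b + v * int p = 1"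
  proof -
    have "coprime (int b) (int p)" using assms by simp
    then have "gcd (int b) (int p) = 1" by simp
    then show ?thesis using bezout_int[of "int b" "int p"] that by auto
  qed
  have "1 = A (of_int (u * int b + v * int p))" using uv by simp
  also have "\<dots> = A (of_int u * of_nat b + of_int v * of_nat p)" by simp
  also have "\<dots> \<le> max (A (of_int u * of_nat b)) (A (of_int v * of_nat p))" by (rule A_add)
  finally have *: "1 \<le> max (A (of_int u) * A (of_nat b)) (A (of_int v) * (1 / real p))"
    by (simp add: A_mult Ap)
  have "A (of_int v) * (1 / real p) \<le> 1 / real p"
    using A_of_int_le[of v] p_ge3 by (simp add: divide_le_eq)
  moreover have "1 / real p < 1" using p_ge3 by simp
  ultimately have "1 \<le> A (of_int u) * A (of_nat b)" using * by linarith
  also have "\<dots> \<le> A (of_nat b)"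
    using A_of_int_le[of u] A_nonneg[of "of_nat b"] A_nonneg[of "of_int u"] by (rule_tac mult_left_le_one_le) auto
  finally show ?thesis using A_of_nat_le[of b] by linarith
qed

end


context qsetup
begin

definition "dl = A (q - 1)"

lemma dl_pos: "dl > 0"
  unfolding dl_def using A_nonneg[of "q-1"] A_zero_iff[of "q-1"] q1 by force

lemma dl_pow: "dl ^ (p - 1) < 1 / real p"
proof -
  define P where "P = real p powr (- 1 / (real p - 1))"
  have p3: "real p \<ge> 3" using p_ge3 by simp
  have "dl < P" unfolding dl_def P_def using small A_commute[of q 1] by simp
  then have "dl ^ (p - 1) < P ^ (p - 1)"
    using dl_pos p_ge3 by (intro power_strict_mono) auto
  also have "P ^ (p - 1) = P powr real (p - 1)"
    unfolding P_def using p3 by (subst powr_realpow) auto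
  also have "\<dots> = real p powr (- 1 / (real p - 1) * real (p - 1))"
    unfolding P_def by (simp add: powr_powr)
  also have "- 1 / (real p - 1) * real (p - 1) = -1"
    using p_ge3 p3 by (simp add: of_nat_diff)
  also have "real p powr (-1) = 1 / real p"
    using p3 by (simp add: powr_minus divide_inverse)
  finally show ?thesis .
qed

lemma pow_small_lt1: assumes "e \<ge> 0" "e ^ (p - 1) < 1 / real p" shows "e < 1"
proof (rule ccontr)
  assume "\<not> e < 1"
  then have "1 \<le> e ^ (p - 1)" by (simp add: one_le_power)
  moreover have "1 / real p < 1" using p_ge3 by simp
  ultimately show False using assms by linarith
qed

lemma dl_lt1: "dl < 1" using pow_small_lt1[OF _ dl_pow] dl_pos by simp

lemma A_near1: assumes "A (w - 1) < 1" shows "A w = 1"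
proof -
  have "A ((w - 1) + 1) = A 1" by (rule A_strict) (use assms in simp)
  then show ?thesis by simp
qed

lemma A_q: "A q = 1" using A_near1 dl_lt1 unfolding dl_def by simp
lemma q_nz: "q \<noteq> 0" using A_q by auto

lemma A_pow1: assumes "A w = 1" shows "A (w ^ n - 1) \<le> A (w - 1)"
proof -
  have "A (\<Sum>i<n. w ^ i) \<le> 1"
    by (rule A_sum_le) (auto simp: A_power assms)
  then have "A (w - 1) * A (\<Sum>i<n. w ^ i) \<le> A (w - 1)"
    using A_nonneg[of "w - 1"] by (simp add: mult_left_le)
  then show ?thesis by (simp add: power_diff_1_eq A_mult)
qed

lemma A_powi: assumes "A w = 1" shows "A (w powi c) = 1"
proof (cases "c \<ge> 0")
  case True then obtain n where "c = int n" by (intro that[of "nat c"]) simp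
  then show ?thesis using assms by (simp add: A_power)
next
  case False then obtain n where "c = - int n" by (intro that[of "nat (- c)"]) simp
  then show ?thesis using assms by (simp add: power_int_minus A_inverse A_power)
qed

lemma A_powi1: assumes "A w = 1" shows "A (w powi c - 1) \<le> A (w - 1)"
proof (cases "c \<ge> 0")
  case True then obtain n where "c = int n" by (intro that[of "nat c"]) simp
  then show ?thesis using assms A_pow1 by simp
next
  case False then obtain n where c: "c = - int n" by (intro that[of "nat (- c)"]) simp
  have w0: "w \<noteq> 0" using assms by auto
  have "w powi c - 1 = (1 - w ^ n) / w ^ n" using w0 c by (simp add: power_int_minus field_simps)
  then have "A (w powi c - 1) = A (w ^ n - 1)"
    using assms by (simp add: A_divide A_power A_commute)
  then show ?thesis using A_pow1[OF assms] by simp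
qed

lemma A_qpowi: "A (q powi a) = 1" using A_powi[OF A_q] .

lemma pstep:
  assumes e: "A (w - 1) = e" "e > 0" "e ^ (p - 1) < 1 / real p"
  shows "A (w ^ p - 1) = e / real p"
proof -
  define u where "u = w - 1"
  have e1: "e < 1" using pow_small_lt1[OF _ e(3)] e(2) by simp
  have p3: "p \<ge> 3" by (rule p_ge3)
  define f where "f k = of_nat (p choose k) * u ^ k" for k
  have "w ^ p = (u + 1) ^ p" unfolding u_def by simp
  also have "\<dots> = (\<Sum>k\<le>p. f k)" unfolding f_def by (simp add: binomial_ring)
  also have "{..p} = insert 0 (insert 1 {2..p})" using p3 by auto
  also have "sum f (insert 0 (insert 1 {2..p})) = f 0 + (f 1 + sum f {2..p})" by simp
  finally have wp: "w ^ p - 1 = sum f {2..p} + of_nat p * u" unfolding f_def by simp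
  have Au: "A u = e" unfolding u_def using e by simp
  have "A (sum f {2..p}) < e / real p"
  proof (rule A_sum_less)
    fix k assume k: "k \<in> {2..p}"
    show "A (f k) < e / real p"
    proof (cases "k = p")
      case True
      have "e ^ p = e ^ Suc (p - 1)" using p3 by simp
      also have "\<dots> = e * e ^ (p - 1)" by simp
      also have "\<dots> < e * (1 / real p)" using e by (intro mult_strict_left_mono) auto
      finally show ?thesis using True by (simp add: f_def A_mult A_power Au)
    next
      case False
      then have "0 < k" "k < p" using k by auto
      then have "p dvd (p choose k)" using dvd_choose_prime pr by auto
      then obtain c where c: "p choose k = p * c" by blast
      have fk: "A (f k) = A (of_nat c) * e ^ k / real p"
        by (simp add: f_def c A_mult A_power Au Ap)
      have "A (of_nat c) * e ^ k \<le> e ^ k"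
        using A_of_nat_le[of c] e(2) A_nonneg[of "of_nat c"] by (intro mult_left_le_one_le) auto
      also have "e ^ k \<le> e ^ 2" using k e1 e(2) by (intro power_decreasing) auto
      also have "e ^ 2 < e" using e1 e(2) by (simp add: power2_eq_square)
      finally have "A (of_nat c) * e ^ k < e" .
      then show ?thesis unfolding fk using p3 by (simp add: divide_strict_right_mono)
    qed
  qed (use e p3 in simp)
  moreover have "A (of_nat p * u) = e / real p" by (simp add: A_mult Ap Au)
  ultimately show ?thesis unfolding wp by (simp add: A_strict)
qed

lemma piter:
  assumes e: "A (w - 1) = e" "e > 0" "e ^ (p - 1) < 1 / real p"
  shows "A (w ^ (p ^ N) - 1) = e / real p ^ N"
proof (induction N)
  case (Suc N)
  have p3: "real p \<ge> 3" using p_ge3 by simp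
  have pos: "e / real p ^ N > 0" using e p3 by simp
  have "(e / real p ^ N) ^ (p - 1) \<le> e ^ (p - 1)"
    using e p3 by (intro power_mono) (auto simp: divide_le_eq one_le_power)
  then have "(e / real p ^ N) ^ (p - 1) < 1 / real p" using e by linarith
  then have "A ((w ^ (p ^ N)) ^ p - 1) = e / real p ^ N / real p"
    using pstep[OF Suc pos] by simp
  then show ?case by (simp add: power_mult[symmetric] mult.commute)
qed (use e in simp)

lemma q_piter: "A (q ^ (p ^ N) - 1) = dl / real p ^ N"
  using piter[OF _ dl_pos dl_pow] unfolding dl_def by simp

lemma no_root:
  assumes "A (w - 1) = e" "e > 0" "e ^ (p - 1) < 1 / real p" "k \<ge> 1"
  shows "w ^ k \<noteq> 1"
  using assms
proof (induction k arbitrary: w e rule: less_induct)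
  case (less k)
  have e1: "e < 1" using pow_small_lt1[OF _ less(4)] less(3) by simp
  have p3: "p \<ge> 3" by (rule p_ge3)
  show ?case
  proof (cases "p dvd k")
    case True
    then obtain k' where k': "k = p * k'" by blast
    then have "k' \<ge> 1" "k' < k" using less(5) p3 by (auto simp: k')
    have pos: "e / real p > 0" using less p3 by simp
    have "(e / real p) ^ (p - 1) \<le> e ^ (p - 1)"
      using less(3) p3 by (intro power_mono) (auto simp: divide_le_eq)
    then have "(e / real p) ^ (p - 1) < 1 / real p" using less by linarith
    from less(1)[OF \<open>k' < k\<close> pstep[OF less(2-4)] pos this \<open>k' \<ge> 1\<close>]
    show ?thesis by (simp add: k' power_mult)
  next
    case False
    then have "coprime k p" using prime_imp_coprime[OF pr False] by (simp add: coprime_commute)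
    then have Ak: "A (of_nat k) = 1" by (rule A_coprime)
    have Aw: "A w = 1" using A_near1 less e1 by simp
    have S: "(\<Sum>i<k. w ^ i) = (\<Sum>i<k. w ^ i - 1) + of_nat k"
      by (simp add: sum_subtractf)
    have "A (\<Sum>i<k. w ^ i - 1) \<le> e"
      by (rule A_sum_le) (use A_pow1[OF Aw] less in auto)
    then have "A (\<Sum>i<k. w ^ i) = 1" unfolding S using e1 Ak by (simp add: A_strict)
    then have "(\<Sum>i<k. w ^ i) \<noteq> 0" by auto
    moreover have "w - 1 \<noteq> 0" using less by auto
    ultimately have "w ^ k - 1 \<noteq> 0" by (simp add: power_diff_1_eq)
    then show ?thesis by simp
  qed
qed

lemma q_no_root: "k \<ge> 1 \<Longrightarrow> q ^ k \<noteq> 1"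
  using no_root[OF _ dl_pos dl_pow] unfolding dl_def by simp

lemma qnat_nz: "k \<ge> 1 \<Longrightarrow> qnat q k \<noteq> 0"
  using q_no_root[of k] q1 by (simp add: qnat_def)

lemma qfact_nz: "qfact q m \<noteq> 0"
  unfolding qfact_def using qnat_nz by (auto simp: prod_zero_iff)

lemma onepE_nz: "1 + q powi a \<noteq> 0"
proof
  assume h: "1 + q powi a = 0"
  have "A (q powi a - 1) \<le> dl" using A_powi1[OF A_q] unfolding dl_def by simp
  moreover have "q powi a - 1 = - of_nat 2" using h by (simp add: eq_neg_iff_add_eq_0 add.commute)
  moreover have "coprime 2 p" using od by (simp add: coprime_commute)
  ultimately show False using A_coprime[of 2] dl_lt1 by simp
qed

end


context qsetup
begin

lemma conv_unique: assumes "conv_abs A s L1" "conv_abs A s L2" shows "L1 = L2"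
proof -
  have "A (L1 - L2) < e" if e: "e > 0" for e
  proof -
    obtain N1 where N1: "\<forall>n\<ge>N1. A (s n - L1) < e" using assms(1) e unfolding conv_abs_def by blast
    obtain N2 where N2: "\<forall>n\<ge>N2. A (s n - L2) < e" using assms(2) e unfolding conv_abs_def by blast
    define n where "n = max N1 N2"
    have "L1 - L2 = (s n - L2) - (s n - L1)" by simp
    then have "A (L1 - L2) \<le> max (A (s n - L2)) (A (s n - L1))" using A_diff by metis
    moreover have "A (s n - L1) < e" "A (s n - L2) < e" using N1 N2 unfolding n_def by auto
    ultimately show ?thesis by (simp add: max_def split: if_splits)
  qed
  then have "A (L1 - L2) \<le> 0" by (meson dense_le_bounded less_le_not_le not_le_imp_less order_refl)
  then show ?thesis using A_nonneg[of "L1 - L2"] A_zero_iff[of "L1 - L2"] by simp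
qed

lemma lim_eq: "conv_abs A s L \<Longrightarrow> lim_abs A s = L"
  unfolding lim_abs_def using conv_unique by blast

lemma pow_eventually: "\<exists>M. \<forall>n\<ge>M. c / real p ^ n < e" if "e > 0"
proof -
  have "(\<lambda>n. c / real p ^ n) \<longlonglongrightarrow> 0" using p_ge3 by (intro LIMSEQ_divide_realpow_zero) simp
  then have "eventually (\<lambda>n. c / real p ^ n < e) sequentially" using that by (rule order_tendstoD)
  then show ?thesis unfolding eventually_sequentially .
qed

lemma conv_bound:
  assumes "\<And>N. A (s N - L) \<le> c / real p ^ N"
  shows "conv_abs A s L"
  unfolding conv_abs_def
proof (intro allI impI)
  fix e :: real assume "e > 0"
  then obtain M where "\<forall>n\<ge>M. c / real p ^ n < e" using pow_eventually by blast
  then show "\<exists>N. \<forall>n\<ge>N. A (s n - L) < e" using assms by (meson le_less_trans)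
qed

lemma shift_bound:
  "A (q powi a * (q ^ (p ^ N)) powi c - q powi a) \<le> dl / real p ^ N"
proof -
  have "A (q ^ (p ^ N)) = 1" by (simp add: A_power A_q)
  then have "A ((q ^ (p ^ N)) powi c - 1) \<le> A (q ^ (p ^ N) - 1)" by (rule A_powi1)
  also have "\<dots> = dl / real p ^ N" by (rule q_piter)
  moreover have "q powi a * (q ^ (p ^ N)) powi c - q powi a = q powi a * ((q ^ (p ^ N)) powi c - 1)"
    by (simp add: algebra_simps)
  ultimately show ?thesis by (simp add: A_mult A_qpowi)
qed

lemma powi_shift: "q powi (a + int (p ^ N) * c) = q powi a * (q ^ (p ^ N)) powi c"
proof -
  have "q powi (int (p ^ N) * c) = (q ^ (p ^ N)) powi c" by (simp only: power_int_mult power_int_of_nat)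
  then show ?thesis using q_nz by (simp add: power_int_add)
qed

lemma pow_nat_powi: "0 \<le> y \<Longrightarrow> q ^ nat y = q powi y"
  by (metis power_int_of_nat int_nat_eq)

lemma cong_split:
  assumes "y mod int p ^ N = K mod int p ^ N"
  obtains c where "y = K + int (p ^ N) * c"
proof -
  have "int p ^ N dvd y - K" using assms by (simp add: mod_eq_dvd_iff)
  then obtain c where "y - K = int p ^ N * c" by blast
  then show ?thesis using that[of c] by simp
qed

lemma qpow_cong:
  assumes "\<And>N. 0 \<le> y N" "\<And>N. y N mod int p ^ N = K mod int p ^ N"
  shows "qpow A q y = q powi K"
  unfolding qpow_def
proof (rule lim_eq, rule conv_bound)
  fix N
  obtain c where c: "y N = K + int (p ^ N) * c" using cong_split[OF assms(2)] by blast
  have "q ^ nat (y N) = q powi (y N)" using assms(1)[of N] by (metis power_int_of_nat int_nat_eq)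
  also have "\<dots> = q powi K * (q ^ (p ^ N)) powi c" unfolding c by (rule powi_shift)
  finally show "A (q ^ nat (y N) - q powi K) \<le> dl / real p ^ N" using shift_bound by simp
qed

lemma zp_mod: assumes "zp p x" "n \<le> m" shows "x m mod int p ^ n = x n mod int p ^ n"
  using assms(2)
proof (induction m rule: dec_induct)
  case (step m)
  have "x (Suc m) mod int p ^ n = x (Suc m) mod int p ^ m mod int p ^ n"
  proof -
    have "int p ^ n dvd int p ^ m" using step(1) by (simp add: le_imp_power_dvd)
    then show ?thesis by (simp add: mod_mod_cancel)
  qed
  also have "\<dots> = x m mod int p ^ n" using assms(1) unfolding zp_def by simp
  finally show ?case using step by simp
qed simp

lemma zp_nonneg: "zp p x \<Longrightarrow> 0 \<le> x N" unfolding zp_def by blast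

lemma A_pow_diff: assumes "A a = 1" "A b = 1" shows "A (a ^ l - b ^ l) \<le> A (a - b)"
proof -
  have "A (\<Sum>i<l. b ^ (l - Suc i) * a ^ i) \<le> 1"
    by (rule A_sum_le) (auto simp: A_mult A_power assms)
  then have "A (a - b) * A (\<Sum>i<l. b ^ (l - Suc i) * a ^ i) \<le> A (a - b)"
    using A_nonneg[of "a - b"] by (simp add: mult_left_le)
  then show ?thesis by (simp add: power_diff_sumr2 A_mult)
qed

context
  fixes x assumes zx: "zp p x"
begin

definition "sx N = q powi (x N)"

lemma sx_step: "n \<le> m \<Longrightarrow> A (sx m - sx n) \<le> dl / real p ^ n"
proof -
  assume "n \<le> m"
  then have "x m mod int p ^ n = x n mod int p ^ n" by (rule zp_mod[OF zx])
  then obtain c where c: "x m = x n + int (p ^ n) * c" by (rule cong_split)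
  show ?thesis unfolding sx_def c powi_shift by (rule shift_bound)
qed

lemma sx_cauchy: "A (sx m - sx n) \<le> dl / real p ^ min m n"
proof (cases "n \<le> m")
  case True then have "min m n = n" by simp
  then show ?thesis using sx_step[OF True] by simp
next
  case False then have "min m n = m" by simp
  then show ?thesis using sx_step[of m n] False A_commute[of "sx m"] by simp
qed

definition "X = qpow A q x"

lemma sx_conv: "conv_abs A sx X"
proof -
  have "\<exists>L. conv_abs A sx L"
  proof (rule cp[unfolded complete_abs_def, rule_format])
    fix e :: real assume "e > 0"
    then obtain M where M: "\<forall>n\<ge>M. dl / real p ^ n < e" using pow_eventually by blast
    show "\<exists>N. \<forall>m\<ge>N. \<forall>n\<ge>N. A (sx m - sx n) < e"
      using M sx_cauchy by (meson le_less_trans min.boundedI)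
  qed
  then obtain L where L: "conv_abs A sx L" by blast
  have "qpow A q x = lim_abs A sx"
    unfolding qpow_def sx_def
    by (rule arg_cong[where f = "lim_abs A"]) (use zx[THEN zp_nonneg] pow_nat_powi in \<open>auto intro!: ext\<close>)
  then show ?thesis using L lim_eq[OF L] unfolding X_def by simp
qed

lemma sx_bound: "A (sx N - X) \<le> dl / real p ^ N"
proof (rule field_le_epsilon)
  fix e :: real assume "e > 0"
  then obtain M where M: "\<forall>n\<ge>M. A (sx n - X) < e" using sx_conv unfolding conv_abs_def by blast
  define m where "m = max M N"
  have "sx N - X = (sx N - sx m) + (sx m - X)" by simp
  then have "A (sx N - X) \<le> max (A (sx N - sx m)) (A (sx m - X))" using A_add by metis
  moreover have "A (sx N - sx m) \<le> dl / real p ^ N"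
    using sx_step[of N m] A_commute[of "sx N"] by (simp add: m_def)
  moreover have "A (sx m - X) < e" using M by (simp add: m_def)
  moreover have "dl / real p ^ N \<ge> 0" using dl_pos by simp
  ultimately show "A (sx N - X) \<le> dl / real p ^ N + e" using \<open>e > 0\<close> by (auto simp: max_def split: if_splits)
qed

lemma A_sx: "A (sx N) = 1" unfolding sx_def by (rule A_qpowi)

lemma A_X: "A X = 1"
proof -
  have "A (X - sx 0) \<le> dl" using sx_bound[of 0] A_commute[of "sx 0"] by simp
  then have "A (X - sx 0) < A (sx 0)" using dl_lt1 A_sx by simp
  then have "A ((X - sx 0) + sx 0) = A (sx 0)" by (rule A_strict)
  then show ?thesis using A_sx by simp
qed

lemma qpow_lin:
  assumes "\<And>N. 0 \<le> y N" "\<And>N. y N mod int p ^ N = (int l * x N + m) mod int p ^ N"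
  shows "qpow A q y = X ^ l * q powi m"
  unfolding qpow_def
proof (rule lim_eq, rule conv_bound)
  fix N
  obtain c where c: "y N = (int l * x N + m) + int (p ^ N) * c" using cong_split[OF assms(2)] by blast
  define W where "W = (q ^ (p ^ N)) powi c"
  have "q ^ nat (y N) = q powi (y N)" using assms(1)[of N] by (metis power_int_of_nat int_nat_eq)
  also have "\<dots> = q powi (int l * x N + m) * W" unfolding c W_def by (rule powi_shift)
  also have "q powi (int l * x N + m) = sx N ^ l * q powi m"
    unfolding sx_def using q_nz by (simp add: power_int_add power_int_mult power_int_power' mult.commute)
  finally have e: "q ^ nat (y N) - X ^ l * q powi m
      = q powi m * (sx N ^ l * (W - 1) + (sx N ^ l - X ^ l))"
    by (simp add: algebra_simps)
  have "A (W - 1) \<le> dl / real p ^ N"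
    using shift_bound[of 0 N c] unfolding W_def by simp
  then have 1: "A (sx N ^ l * (W - 1)) \<le> dl / real p ^ N" by (simp add: A_mult A_power A_sx)
  have 2: "A (sx N ^ l - X ^ l) \<le> dl / real p ^ N"
    using A_pow_diff[OF A_sx A_X, of N l] sx_bound[of N] by linarith
  have "A (sx N ^ l * (W - 1) + (sx N ^ l - X ^ l)) \<le> dl / real p ^ N"
    using A_add[of "sx N ^ l * (W - 1)" "sx N ^ l - X ^ l"] 1 2 by linarith
  then show "A (q ^ nat (y N) - X ^ l * q powi m) \<le> dl / real p ^ N"
    unfolding e by (simp add: A_mult A_qpowi)
qed

end

end


context qsetup
begin

lemma A_onepE: "A (1 + q powi a) = 1"
proof -
  have "A (q powi a - 1) \<le> dl" using A_powi1[OF A_q] unfolding dl_def by simp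
  moreover have "coprime 2 p" using od by (simp add: coprime_commute)
  then have "A (of_nat 2) = 1" by (rule A_coprime)
  ultimately have "A (q powi a - 1) < A (of_nat 2)" using dl_lt1 by simp
  then have "A ((q powi a - 1) + of_nat 2) = A (of_nat 2)" by (rule A_strict)
  then show ?thesis using \<open>A (of_nat 2) = 1\<close> by (simp add: add.commute)
qed

lemma fint_eval:
  assumes "\<And>k. f (zp_of_int p (int k)) = D * (q powi a) ^ k"
  shows "fint p A f = 2 * D / (1 + q powi a)"
  unfolding fint_def
proof (rule lim_eq, rule conv_bound)
  fix N
  define E where "E = q powi a"
  have E1: "1 + E \<noteq> 0" unfolding E_def by (rule onepE_nz)
  have mE: "- E \<noteq> 1" using E1 by (metis add.commute add_eq_0_iff)
  have od': "odd (p ^ N)" using od by simp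
  have "(\<Sum>k<p ^ N. f (zp_of_int p (int k)) * (- 1) ^ k) = D * (\<Sum>k<p ^ N. (- E) ^ k)"
    unfolding sum_distrib_left by (rule sum.cong) (simp_all add: assms E_def power_minus' mult_ac)
  also have "\<dots> = D * (1 + E ^ (p ^ N)) / (1 + E)"
    using mE od' by (simp add: sum_gp_strict)
  finally have s: "(\<Sum>k<p ^ N. f (zp_of_int p (int k)) * (- 1) ^ k) - 2 * D / (1 + E)
      = D * (E ^ (p ^ N) - 1) / (1 + E)"
    using E1 by (simp add: field_simps)
  have "E ^ (p ^ N) = (q ^ (p ^ N)) powi a"
  proof -
    have "E ^ (p ^ N) = q powi (int (p ^ N) * a)"
      unfolding E_def by (simp only: power_int_power' mult.commute)
    also have "\<dots> = (q ^ (p ^ N)) powi a" by (simp only: power_int_mult power_int_of_nat)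
    finally show ?thesis .
  qed
  then have "A (E ^ (p ^ N) - 1) \<le> dl / real p ^ N"
    using shift_bound[of 0 N a] by simp
  then have "A D * A (E ^ (p ^ N) - 1) \<le> A D * (dl / real p ^ N)"
    using A_nonneg[of D] by (rule mult_left_mono)
  then show "A ((\<Sum>k<p ^ N. f (zp_of_int p (int k)) * (- 1) ^ k) - 2 * D / (1 + q powi a))
      \<le> A D * dl / real p ^ N"
    using s A_onepE[of a] unfolding E_def by (simp add: A_divide A_mult)
qed

lemma mfint_eval:
  assumes "\<And>ks. G (\<lambda>j. zp_of_int p (int (ks j))) = C * (\<Prod>j\<in>{1..s}. (q powi a j) ^ ks j)"
  shows "mfint p A s G = C * (\<Prod>j\<in>{1..s}. 2 / (1 + q powi a j))"
  using assms
proof (induction s arbitrary: G C)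
  case 0
  then show ?case using "0.prems"[of "\<lambda>_. 0"] by simp
next
  case (Suc s)
  define D where "D = C * (\<Prod>j\<in>{1..s}. 2 / (1 + q powi a j))"
  have "mfint p A (Suc s) G = fint p A (\<lambda>y. mfint p A s (\<lambda>v. G (v(Suc s := y))))" by simp
  also have "\<dots> = 2 * D / (1 + q powi a (Suc s))"
  proof (rule fint_eval)
    fix k
    show "mfint p A s (\<lambda>v. G (v(Suc s := zp_of_int p (int k)))) = D * (q powi a (Suc s)) ^ k"
    proof -
      have "mfint p A s (\<lambda>v. G (v(Suc s := zp_of_int p (int k))))
          = (C * (q powi a (Suc s)) ^ k) * (\<Prod>j\<in>{1..s}. 2 / (1 + q powi a j))"
      proof (rule Suc.IH)
        fix ks
        define ks' where "ks' = ks(Suc s := k)"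
        have fe: "(\<lambda>j. zp_of_int p (int (ks j)))(Suc s := zp_of_int p (int k))
            = (\<lambda>j. zp_of_int p (int (ks' j)))" unfolding ks'_def by (auto intro!: ext)
        have "(\<Prod>j\<in>{1..Suc s}. (q powi a j) ^ ks' j)
            = (q powi a (Suc s)) ^ k * (\<Prod>j\<in>{1..s}. (q powi a j) ^ ks' j)"
          by (simp add: ks'_def)
        also have "(\<Prod>j\<in>{1..s}. (q powi a j) ^ ks' j) = (\<Prod>j\<in>{1..s}. (q powi a j) ^ ks j)"
          by (rule prod.cong) (auto simp: ks'_def)
        finally show "G ((\<lambda>j. zp_of_int p (int (ks j)))(Suc s := zp_of_int p (int k)))
            = C * (q powi a (Suc s)) ^ k * (\<Prod>j\<in>{1..s}. (q powi a j) ^ ks j)"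
          unfolding fe Suc.prems by (simp add: mult.assoc)
      qed
      then show ?thesis unfolding D_def by (simp add: algebra_simps)
    qed
  qed
  also have "\<dots> = C * (\<Prod>j\<in>{1..Suc s}. 2 / (1 + q powi a j))"
    unfolding D_def by (simp add: algebra_simps)
  finally show ?case .
qed

end


context qsetup
begin

definition "Pq y m = (\<Prod>i<m. y - qnat q i)"
definition "bq r m = Pq (qnat q r) m / qfact q m"

lemma qnat0[simp]: "qnat q 0 = 0" by (simp add: qnat_def)

lemma qfact_Suc: "qfact q (Suc k) = qfact q k * qnat q (Suc k)"
  by (simp add: qfact_def)

lemma bq_0: "bq r 0 = 1" by (simp add: bq_def Pq_def qfact_def)

lemma bq_top: "bq r (Suc r) = 0" by (simp add: bq_def Pq_def)

lemma qnat_rec1: "qnat q (Suc r) - qnat q (Suc i) = q * (qnat q r - qnat q i)"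
  using q1 by (simp add: qnat_def field_simps)

lemma frac_aux: "(d::'a) \<noteq> 0 \<Longrightarrow> q * (a / d - b / d) + c / d = (q * (a - b) + c) / d"
  by (simp add: field_simps)

lemma qnat_rec2: "qnat q (Suc r) = q * (qnat q r - qnat q k) + qnat q (Suc k)"
proof -
  have d: "1 - q \<noteq> 0" using q1 by simp
  have "q * (qnat q r - qnat q k) + qnat q (Suc k)
     = (q * ((1 - q ^ r) - (1 - q ^ k)) + (1 - q ^ Suc k)) / (1 - q)"
    unfolding qnat_def by (rule frac_aux[OF d])
  also have "q * ((1 - q ^ r) - (1 - q ^ k)) + (1 - q ^ Suc k) = 1 - q ^ Suc r"
    by (simp add: algebra_simps)
  finally show ?thesis by (simp add: qnat_def)
qed

lemma Pq_Suc_top: "Pq (qnat q (Suc r)) (Suc k) = qnat q (Suc r) * q ^ k * Pq (qnat q r) k"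
proof -
  have "Pq (qnat q (Suc r)) (Suc k) = qnat q (Suc r) * (\<Prod>i<k. qnat q (Suc r) - qnat q (Suc i))"
    unfolding Pq_def prod.lessThan_Suc_shift by simp
  also have "(\<Prod>i<k. qnat q (Suc r) - qnat q (Suc i)) = (\<Prod>i<k. q * (qnat q r - qnat q i))"
    by (simp add: qnat_rec1)
  also have "\<dots> = q ^ k * Pq (qnat q r) k" unfolding Pq_def by (simp add: prod.distrib)
  finally show ?thesis by simp
qed

lemma bq_rec: "bq (Suc r) (Suc k) = q ^ Suc k * bq r (Suc k) + q ^ k * bq r k"
proof -
  have f: "qfact q k \<noteq> 0" "qnat q (Suc k) \<noteq> 0" using qfact_nz qnat_nz by auto
  have "bq (Suc r) (Suc k) = q ^ k * Pq (qnat q r) k * qnat q (Suc r) / (qfact q k * qnat q (Suc k))"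
    unfolding bq_def Pq_Suc_top qfact_Suc by (simp add: ac_simps)
  also have "\<dots> = q ^ k * Pq (qnat q r) k * (q * (qnat q r - qnat q k) + qnat q (Suc k))
      / (qfact q k * qnat q (Suc k))" using qnat_rec2[of r k] by simp
  also have "\<dots> = q ^ Suc k * bq r (Suc k) + q ^ k * bq r k"
    unfolding bq_def qfact_Suc using f by (simp add: Pq_def field_simps)
  finally show ?thesis .
qed

lemma qbinom: "(\<Prod>j\<in>{1..r}. 1 + z * q ^ (r - j)) = (\<Sum>m\<le>r. bq r m * z ^ m)"
proof (induction r arbitrary: z)
  case 0
  then show ?case by (simp add: bq_0)
next
  case (Suc r)
  define c where "c m = bq r m * q ^ m" for m
  have "(\<Prod>j\<in>{1..Suc r}. 1 + z * q ^ (Suc r - j)) = (1 + z) * (\<Prod>j\<in>{1..r}. 1 + z * q ^ (Suc r - j))"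
    by simp
  also have "(\<Prod>j\<in>{1..r}. 1 + z * q ^ (Suc r - j)) = (\<Prod>j\<in>{1..r}. 1 + (z * q) * q ^ (r - j))"
    by (rule prod.cong) (auto simp: Suc_diff_le)
  also have "\<dots> = (\<Sum>m\<le>r. c m * z ^ m)" unfolding Suc.IH c_def
    by (simp add: power_mult_distrib mult_ac)
  finally have L: "(\<Prod>j\<in>{1..Suc r}. 1 + z * q ^ (Suc r - j))
     = (\<Sum>m\<le>r. c m * z ^ m) + (\<Sum>m\<le>r. c m * z ^ Suc m)"
    by (simp add: algebra_simps sum_distrib_left sum.distrib)
  have bS: "bq (Suc r) m = c m + (if m = 0 then 0 else c (m - 1))" for m
    by (cases m) (simp_all add: c_def bq_0 bq_rec)
  have "(\<Sum>m\<le>Suc r. bq (Suc r) m * z ^ m)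
      = (\<Sum>m\<le>Suc r. c m * z ^ m) + (\<Sum>m\<le>Suc r. (if m = 0 then 0 else c (m - 1)) * z ^ m)"
    unfolding bS by (simp add: algebra_simps sum.distrib)
  also have "(\<Sum>m\<le>Suc r. c m * z ^ m) = (\<Sum>m\<le>r. c m * z ^ m)"
    by (simp add: c_def bq_top)
  also have "(\<Sum>m\<le>Suc r. (if m = 0 then 0 else c (m - 1)) * z ^ m) = (\<Sum>m\<le>r. c m * z ^ Suc m)"
    by (subst sum.atMost_Suc_shift) simp
  finally show ?case using L by simp
qed

lemma S1_conv:
  assumes "m = 0 \<or> y \<noteq> 0"
  shows "(\<Sum>k=0..m. qS1 q (int m - 1) k * (- 1) ^ k * y ^ (m - k)) = Pq y m"
proof (cases m)
  case 0
  then show ?thesis by (simp add: qS1_def Pq_def)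
next
  case (Suc d)
  then have y: "y \<noteq> 0" using assms by simp
  define Qp where "Qp = (\<Prod>i\<in>{1..d}. [:1, qnat q i:])"
  have S: "qS1 q (int m - 1) k = coeff Qp k" for k unfolding qS1_def Qp_def Suc by simp
  have dg: "degree Qp \<le> d"
  proof -
    have "degree Qp \<le> sum (degree \<circ> (\<lambda>i. [:1, qnat q i:])) {1..d}"
      unfolding Qp_def by (rule degree_prod_sum_le) simp
    also have "\<dots> \<le> sum (\<lambda>i. 1) {1..d}" by (rule sum_mono) simp
    finally show ?thesis by simp
  qed
  define w where "w = - 1 / y"
  have "(\<Sum>k=0..m. qS1 q (int m - 1) k * (- 1) ^ k * y ^ (m - k))
      = (\<Sum>k\<le>m. y ^ m * (coeff Qp k * w ^ k))"
    unfolding S atLeast0AtMost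
  proof (rule sum.cong)
    fix k assume "k \<in> {..m}"
    then have "y ^ m = y ^ (m - k) * y ^ k" by (simp add: power_add[symmetric])
    then show "coeff Qp k * (- 1) ^ k * y ^ (m - k) = y ^ m * (coeff Qp k * w ^ k)"
      using y by (simp add: w_def power_divide power_minus' field_simps)
  qed simp
  also have "\<dots> = y ^ m * (\<Sum>k\<le>m. coeff Qp k * w ^ k)" by (simp add: sum_distrib_left)
  also have "(\<Sum>k\<le>m. coeff Qp k * w ^ k) = poly Qp w"
    unfolding poly_altdef
    by (rule sum.mono_neutral_right) (use dg Suc in \<open>auto simp: coeff_eq_0\<close>)
  also have "poly Qp w = (\<Prod>i\<in>{1..d}. 1 + qnat q i * w)"
    unfolding Qp_def by (simp add: poly_prod mult.commute)
  also have "y ^ m * \<dots> = y * (\<Prod>i\<in>{1..d}. y * (1 + qnat q i * w))"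
    by (simp add: Suc prod.distrib)
  also have "(\<Prod>i\<in>{1..d}. y * (1 + qnat q i * w)) = (\<Prod>i\<in>{1..d}. y - qnat q i)"
    using y by (intro prod.cong) (auto simp: w_def field_simps)
  also have "y * \<dots> = Pq y m"
    unfolding Pq_def Suc prod.lessThan_Suc_shift by (simp add: prod.atLeast1_atMost_eq)
  finally show ?thesis .
qed

end


context qsetup
begin

lemma pN_pos: "(0::int) < int p ^ N" using p_ge3 by simp

lemma qpow_scale_x: "zp p x \<Longrightarrow> qpow A q (zp_scale p (int l) x) = qpow A q x ^ l"
  using qpow_lin[of x "zp_scale p (int l) x" l 0] pN_pos
  by (simp add: zp_scale_def X_def)

lemma qpow_add_x: "zp p x \<Longrightarrow> qpow A q (zp_add p x (zp_of_int p (int m))) = qpow A q x * q ^ m"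
  using qpow_lin[of x "zp_add p x (zp_of_int p (int m))" 1 "int m"] pN_pos
  by (simp add: zp_add_def zp_of_int_def X_def mod_add_right_eq)

lemma qpow_zsum:
  "qpow A q (zp_scale p (int l) (zp_sum p r (\<lambda>j. zp_of_int p (int (ks j)))))
     = q ^ (l * (\<Sum>j\<in>{1..r}. ks j))"
proof -
  have "qpow A q (zp_scale p (int l) (zp_sum p r (\<lambda>j. zp_of_int p (int (ks j)))))
     = q powi (int l * (\<Sum>j\<in>{1..r}. int (ks j)))"
    by (rule qpow_cong) (use pN_pos in \<open>simp_all add: zp_scale_def zp_sum_def zp_of_int_def
          mod_mult_right_eq mod_sum_eq\<close>)
  also have "int l * (\<Sum>j\<in>{1..r}. int (ks j)) = int (l * (\<Sum>j\<in>{1..r}. ks j))" by simp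
  finally show ?thesis by (simp only: power_int_of_nat)
qed

lemma qpow_zj:
  "qpow A q (zp_scale p (h - int j) (zp_of_int p (int k))) = (q powi (h - int j)) ^ k"
proof -
  have "qpow A q (zp_scale p (h - int j) (zp_of_int p (int k))) = q powi ((h - int j) * int k)"
    by (rule qpow_cong) (use pN_pos in \<open>simp_all add: zp_scale_def zp_of_int_def mod_mult_right_eq\<close>)
  then show ?thesis by (simp add: power_int_power')
qed

lemma integrand_eval:
  "mfint p A r (\<lambda>v. qpow A q (zp_scale p (int l) (zp_sum p r v)) *
            (\<Prod>j=1..r. qpow A q (zp_scale p (h - int j) (v j))))
   = (\<Prod>j\<in>{1..r}. 2 / (1 + q powi (int l + h - int j)))"
proof -
  have "mfint p A r (\<lambda>v. qpow A q (zp_scale p (int l) (zp_sum p r v)) *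
            (\<Prod>j=1..r. qpow A q (zp_scale p (h - int j) (v j))))
     = 1 * (\<Prod>j\<in>{1..r}. 2 / (1 + q powi (int l + h - int j)))"
  proof (rule mfint_eval)
    fix ks
    have e: "q powi (int l + h - int j) = q ^ l * q powi (h - int j)" for j
    proof -
      have "q powi (int l + h - int j) = q powi (int l + (h - int j))" by (simp add: algebra_simps)
      then show ?thesis using q_nz by (simp add: power_int_add)
    qed
    show "qpow A q (zp_scale p (int l) (zp_sum p r (\<lambda>j. zp_of_int p (int (ks j))))) *
        (\<Prod>j = 1..r. qpow A q (zp_scale p (h - int j) (zp_of_int p (int (ks j)))))
      = 1 * (\<Prod>j\<in>{1..r}. (q powi (int l + h - int j)) ^ ks j)"
      unfolding qpow_zsum qpow_zj e
      by (simp add: power_mult power_sum prod.distrib power_mult_distrib)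
  qed
  then show ?thesis by simp
qed

end


context qsetup
begin

lemma final:
  fixes h :: int and n r :: nat and x :: "nat \<Rightarrow> int"
  assumes zx: "zp p x"
  shows "Enq p A q h r n x =
    1 / 2 ^ r * (\<Sum>m=0..r. 1 / qfact q m *
      (\<Sum>k=0..m. q powi ((h - int r) * int m) * qS1 q (int m - 1) k * (-1) ^ k
         * qnat q r ^ (m - k) * qbr A q (zp_add p x (zp_of_int p (int m))) ^ n))"
proof -
  define X where "X = qpow A q x"
  define w where "w = q powi (h - int r)"
  define T where "T l m = of_nat (n choose l) * (-1) ^ l * X ^ l * (bq r m * w ^ m * (q ^ m) ^ l)"
    for l m
  have L: "of_nat (n choose l) * (-1) ^ l * qpow A q (zp_scale p (int l) x) /
        mfint p A r (\<lambda>v. qpow A q (zp_scale p (int l) (zp_sum p r v)) *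
            (\<Prod>j=1..r. qpow A q (zp_scale p (h - int j) (v j))))
      = 1 / 2 ^ r * (\<Sum>m\<le>r. T l m)" for l
  proof -
    define z where "z = w * q ^ l"
    have P: "(\<Prod>j\<in>{1..r}. 2 / (1 + q powi (int l + h - int j)))
        = 2 ^ r / (\<Prod>j\<in>{1..r}. 1 + z * q ^ (r - j))"
    proof -
      have "(\<Prod>j\<in>{1..r}. 1 + q powi (int l + h - int j)) = (\<Prod>j\<in>{1..r}. 1 + z * q ^ (r - j))"
      proof (rule prod.cong)
        fix j assume j: "j \<in> {1..r}"
        have "int l + h - int j = int l + (h - int r) + int (r - j)" using j by auto
        then have "q powi (int l + h - int j) = q powi (int l + (h - int r) + int (r - j))"
          by (rule arg_cong)
        also have "\<dots> = q powi (int l) * q powi (h - int r) * q powi (int (r - j))"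
          by (simp only: power_int_add[of q, OF disjI1[OF q_nz]])
        finally have "q powi (int l + h - int j) = q ^ l * w * q ^ (r - j)"
          unfolding w_def by (simp only: power_int_of_nat)
        then show "1 + q powi (int l + h - int j) = 1 + z * q ^ (r - j)"
          unfolding z_def by (simp add: ac_simps)
      qed simp
      then show ?thesis by (simp add: prod_dividef)
    qed
    show ?thesis
      unfolding integrand_eval P qpow_scale_x[OF zx] qbinom divide_divide_eq_right
      unfolding T_def z_def X_def
      by (simp add: sum_distrib_left sum_divide_distrib power_mult_distrib power_mult[symmetric]
          mult.commute[of l] ac_simps)
  qed
  have R: "1 / qfact q m *
      (\<Sum>k=0..m. q powi ((h - int r) * int m) * qS1 q (int m - 1) k * (-1) ^ k
         * qnat q r ^ (m - k) * qbr A q (zp_add p x (zp_of_int p (int m))) ^ n)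
      = 1 / (1 - q) ^ n * (\<Sum>l\<le>n. T l m)" if m: "m \<le> r" for m
  proof -
    define Y where "Y = qbr A q (zp_add p x (zp_of_int p (int m)))"
    have Y: "Y = (1 - X * q ^ m) / (1 - q)"
      unfolding Y_def qbr_def qpow_add_x[OF zx] X_def ..
    have "(\<Sum>k=0..m. q powi ((h - int r) * int m) * qS1 q (int m - 1) k * (-1) ^ k
         * qnat q r ^ (m - k) * Y ^ n)
       = w ^ m * Y ^ n * (\<Sum>k=0..m. qS1 q (int m - 1) k * (-1) ^ k * qnat q r ^ (m - k))"
      unfolding w_def by (simp add: sum_distrib_left power_int_power' ac_simps)
    also have "(\<Sum>k=0..m. qS1 q (int m - 1) k * (-1) ^ k * qnat q r ^ (m - k)) = Pq (qnat q r) m"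
    proof (rule S1_conv)
      show "m = 0 \<or> qnat q r \<noteq> 0" using m qnat_nz[of r] by (cases "r = 0") auto
    qed
    finally have 1: "1 / qfact q m * (\<Sum>k=0..m. q powi ((h - int r) * int m) * qS1 q (int m - 1) k
         * (-1) ^ k * qnat q r ^ (m - k) * Y ^ n) = bq r m * w ^ m * Y ^ n"
      by (simp add: bq_def)
    have "(1 - X * q ^ m) ^ n = (- (X * q ^ m) + 1) ^ n" by simp
    also have "\<dots> = (\<Sum>l\<le>n. of_nat (n choose l) * (- (X * q ^ m)) ^ l)"
      unfolding binomial_ring by simp
    finally have 2: "Y ^ n = 1 / (1 - q) ^ n * (\<Sum>l\<le>n. of_nat (n choose l) * (- (X * q ^ m)) ^ l)"
      unfolding Y by (simp add: power_divide)
    have "bq r m * w ^ m * Y ^ n = 1 / (1 - q) ^ n * (\<Sum>l\<le>n. T l m)"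
      unfolding 2 T_def by (simp add: sum_distrib_left power_minus' power_mult_distrib ac_simps)
    with 1 show ?thesis unfolding Y_def by simp
  qed
  have "Enq p A q h r n x = 1 / (1 - q) ^ n * (\<Sum>l\<le>n. 1 / 2 ^ r * (\<Sum>m\<le>r. T l m))"
    unfolding Enq_def atLeast0AtMost L ..
  also have "\<dots> = 1 / 2 ^ r * (\<Sum>m\<le>r. 1 / (1 - q) ^ n * (\<Sum>l\<le>n. T l m))"
  proof -
    have "(\<Sum>l\<le>n. 1 / 2 ^ r * (\<Sum>m\<le>r. T l m)) = 1 / 2 ^ r * (\<Sum>m\<le>r. \<Sum>l\<le>n. T l m)"
    proof -
      have sw: "(\<Sum>l\<le>n. \<Sum>m\<le>r. T l m) = (\<Sum>m\<le>r. \<Sum>l\<le>n. T l m)" by (rule sum.swap)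
      show ?thesis by (simp only: sum_distrib_left[symmetric] sw)
    qed
    then show ?thesis by (simp only: sum_distrib_left[symmetric] mult.left_commute)
  qed
  also have "(\<Sum>m\<le>r. 1 / (1 - q) ^ n * (\<Sum>l\<le>n. T l m))
     = (\<Sum>m=0..r. 1 / qfact q m *
      (\<Sum>k=0..m. q powi ((h - int r) * int m) * qS1 q (int m - 1) k * (-1) ^ k
         * qnat q r ^ (m - k) * qbr A q (zp_add p x (zp_of_int p (int m))) ^ n))"
  proof -
    have "(\<Sum>m\<le>r. 1 / (1 - q) ^ n * (\<Sum>l\<le>n. T l m))
       = (\<Sum>m=0..r. 1 / (1 - q) ^ n * (\<Sum>l\<le>n. T l m))" by (simp only: atLeast0AtMost)
    also have "\<dots> = (\<Sum>m=0..r. 1 / qfact q m *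
      (\<Sum>k=0..m. q powi ((h - int r) * int m) * qS1 q (int m - 1) k * (-1) ^ k
         * qnat q r ^ (m - k) * qbr A q (zp_add p x (zp_of_int p (int m))) ^ n))"
    proof (rule sum.cong)
      fix m assume "m \<in> {0..r}"
      then show "1 / (1 - q) ^ n * (\<Sum>l\<le>n. T l m) = 1 / qfact q m *
      (\<Sum>k=0..m. q powi ((h - int r) * int m) * qS1 q (int m - 1) k * (-1) ^ k
         * qnat q r ^ (m - k) * qbr A q (zp_add p x (zp_of_int p (int m))) ^ n)"
        by (intro R[symmetric]) auto
    qed (rule refl)
    finally show ?thesis .
  qed
  finally show ?thesis .
qed

end


theorem mainTheorem10:
  fixes p :: nat and av :: "'a::field_char_0 \<Rightarrow> real" and q :: 'a
    and h :: int and n r :: nat and x :: "nat \<Rightarrow> int"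
  assumes "prime p" and "odd p"
    and "Cp_like p av"
    and "av (1 - q) < real p powr (- 1 / (real p - 1))"
    and "q \<noteq> 1"
    and "zp p x"
  shows "Enq p av q h r n x =
    1 / 2 ^ r * (\<Sum>m=0..r. 1 / qfact q m *
      (\<Sum>k=0..m. q powi ((h - int r) * int m) * qS1 q (int m - 1) k * (-1) ^ k
         * qnat q r ^ (m - k) * qbr av q (zp_add p x (zp_of_int p (int m))) ^ n))"
proof -
  interpret qsetup p av q
    using assms unfolding Cp_like_def by unfold_locales auto
  show ?thesis by (rule final[OF assms(6)])
qed

end
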